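(* Let $p$ be a prime, $\mathbb{C}_p$ the field of complex $p$-adic numbers with norm $|\cdot|_p$, $a,b,c\in\mathbb{C}_p$ with $b\neq0$, $c\neq ab$, $f(x)=\frac{x+a}{bx+c}$ for $x\neq -c/b$. Fix a square root $\sqrt{(c-1)^2+4ab}$ and let $x_{1}=\frac{1-c+\sqrt{(c-1)^2+4ab}}{2b}$ (a fixed point of $f$). Assume $$\left|\frac{c-ab}{(bx_1+c)^2}\right|_p<1\qquad\text{and}\qquad \left|\frac{b}{bx_1+c}\right|_p=\left|\frac{2b}{1+c+\sqrt{(c-1)^2+4ab}}\right|_p\le 1.$$ Then $V_1(x_1)\subset A(x_1)$.
   Context: $V_1(x_1)=\{x\in\mathbb{C}_p:|x-x_1|_p<1\}$. The basin of attraction of a fixed point $x_0$ is $A(x_0)=\{y\in\mathbb{C}_p: f^n(y)\to x_0 \text{ as } n\to\infty\}$. *)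

theory Defs
  imports Complex_Main "HOL-Computational_Algebra.Polynomial"
begin

text \<open>We therefore describe it axiomatically: a field carrying a
non-archimedean absolute value which extends the p-adic absolute value of the
rationals (normalised by |p| = 1/p), which is complete and algebraically closed.\<close>

definition nonarch_abs :: "('a::field \<Rightarrow> real) \<Rightarrow> bool" where
  "nonarch_abs N \<longleftrightarrow>
     (\<forall>x. N x \<ge> 0) \<and> (\<forall>x. N x = 0 \<longleftrightarrow> x = 0) \<and>
     (\<forall>x y. N (x * y) = N x * N y) \<and>
     (\<forall>x y. N (x + y) \<le> max (N x) (N y))"

definition abs_complete :: "('a::field \<Rightarrow> real) \<Rightarrow> bool" where
  "abs_complete N \<longleftrightarrow>
     (\<forall>X::nat \<Rightarrow> 'a. (\<forall>e>0. \<exists>M. \<forall>m\<ge>M. \<forall>n\<ge>M. N (X m - X n) < e) \<longrightarrow>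
        (\<exists>L. (\<lambda>n. N (X n - L)) \<longlonglongrightarrow> 0))"

definition alg_closed_field :: "'a::field itself \<Rightarrow> bool" where
  "alg_closed_field _ \<longleftrightarrow> (\<forall>q::'a poly. degree q > 0 \<longrightarrow> (\<exists>x. poly q x = 0))"

definition complex_padic_like :: "nat \<Rightarrow> ('a::field \<Rightarrow> real) \<Rightarrow> bool" where
  "complex_padic_like p N \<longleftrightarrow>
     prime p \<and> nonarch_abs N \<and> N (of_nat p) = inverse (real p) \<and>
     abs_complete N \<and> alg_closed_field TYPE('a)"

definition V1 :: "('a::field \<Rightarrow> real) \<Rightarrow> 'a \<Rightarrow> 'a set" where
  "V1 N x1 = {x. N (x - x1) < 1}"

text \<open>Basin of attraction of x0 under f, where f is only defined off the pole
 (b x + c = 0): the whole orbit must stay in the domain and converge to x0.\<close>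
definition basin :: "('a::field \<Rightarrow> real) \<Rightarrow> ('a \<Rightarrow> 'a) \<Rightarrow> ('a \<Rightarrow> bool) \<Rightarrow> 'a \<Rightarrow> 'a set" where
  "basin N f D x0 = {y. (\<forall>n. D ((f ^^ n) y)) \<and> (\<lambda>n. N ((f ^^ n) y - x0)) \<longlonglongrightarrow> 0}"

end

theory Submission
  imports Defs
begin

lemma na_basic:
  assumes "nonarch_abs (N::'a::field \<Rightarrow> real)"
  shows "N 1 = 1" "N (-1) = 1" "\<And>x. N (-x) = N x" "N 0 = 0"
    "\<And>x y. N (x*y) = N x * N y" "\<And>x y. N (x+y) \<le> max (N x) (N y)" "\<And>x. N x \<ge> 0"
    "\<And>x. N x = 0 \<longleftrightarrow> x = 0"
proof -
  have m: "\<And>x y. N (x*y) = N x * N y" and nz: "\<And>x. N x = 0 \<longleftrightarrow> x = 0"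
    and pos: "\<And>x. N x \<ge> 0"
    using assms unfolding nonarch_abs_def by auto
  have "N 1 = N 1 * N 1" using m[of 1 1] by simp
  moreover have "N 1 \<noteq> 0" using nz by simp
  ultimately show n1: "N 1 = 1" by simp
  have "N (-1) * N (-1) = 1" using m[of "-1" "-1"] n1 by simp
  then have "(N (-1) - 1) * (N (-1) + 1) = 0" by (simp add: algebra_simps)
  moreover have "N (-1) + 1 > 0" using pos[of "-1"] by simp
  ultimately have "N (-1) = 1" by simp
  then show "N (-1) = 1" .
  then show "\<And>x. N (-x) = N x" using m by (metis mult_minus1 mult_1)
  show "N 0 = 0" using nz by simp
  show "\<And>x y. N (x*y) = N x * N y" by (rule m)
  show "\<And>x y. N (x+y) \<le> max (N x) (N y)" using assms unfolding nonarch_abs_def by auto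
  show "\<And>x. N x \<ge> 0" by (rule pos)
  show "\<And>x. N x = 0 \<longleftrightarrow> x = 0" by (rule nz)
qed

lemma na_one_plus:
  assumes "nonarch_abs (N::'a::field \<Rightarrow> real)" "N t < 1"
  shows "N (1 + t) = 1"
proof -
  note B = na_basic[OF assms(1)]
  have "N (1+t) \<le> max (N 1) (N t)" using B(6) .
  then have le: "N (1+t) \<le> 1" using B(1) assms(2) by simp
  have "N 1 \<le> max (N (1+t)) (N (-t))" using B(6)[of "1+t" "-t"] by simp
  then have "1 \<le> N (1+t)" using B(1) B(3)[of t] assms(2) by (auto simp: max_def split: if_splits)
  with le show ?thesis by simp
qed

lemma two_nz:
  assumes "complex_padic_like p (N::'a::field \<Rightarrow> real)"
  shows "(2::'a) \<noteq> 0"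
proof
  assume h: "(2::'a) = 0"
  have pr: "prime p" and na: "nonarch_abs N" and Np: "N (of_nat p) = inverse (real p)"
    using assms unfolding complex_padic_like_def by auto
  note B = na_basic[OF na]
  have "of_nat p = (of_nat (p mod 2) :: 'a)"
  proof -
    have "(of_nat p :: 'a) = of_nat (2 * (p div 2) + p mod 2)" by simp
    also have "\<dots> = 2 * of_nat (p div 2) + of_nat (p mod 2)"
      by (simp only: of_nat_add of_nat_mult of_nat_numeral)
    finally show ?thesis using h by simp
  qed
  moreover have "p mod 2 = 0 \<or> p mod 2 = 1" by auto
  moreover have "p \<ge> 2" using pr prime_ge_2_nat by blast
  ultimately show False using Np B(1) B(4)
    by (auto simp: field_simps)
qed

theorem lemma3p5:
  fixes p :: nat and N :: "'a::field \<Rightarrow> real" and a b c s :: 'a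
  assumes "complex_padic_like p N"
    and "b \<noteq> 0" and "c \<noteq> a * b"
    and "s ^ 2 = (c - 1) ^ 2 + 4 * a * b"
    and "b * ((1 - c + s) / (2 * b)) + c \<noteq> 0"
    and "N ((c - a * b) / (b * ((1 - c + s) / (2 * b)) + c) ^ 2) < 1"
    and "N (b / (b * ((1 - c + s) / (2 * b)) + c)) = N (2 * b / (1 + c + s))"
    and "N (2 * b / (1 + c + s)) \<le> 1"
  shows "V1 N ((1 - c + s) / (2 * b))
         \<subseteq> basin N (\<lambda>x. (x + a) / (b * x + c)) (\<lambda>x. b * x + c \<noteq> 0) ((1 - c + s) / (2 * b))"
proof -
  define x1 where "x1 = (1 - c + s) / (2 * b)"
  define d where "d = b * x1 + c"
  define f where "f = (\<lambda>x. (x + a) / (b * x + c))"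
  define q where "q = N ((c - a * b) / d ^ 2)"
  have na: "nonarch_abs N" using assms(1) unfolding complex_padic_like_def by auto
  note B = na_basic[OF na]
  have two: "(2::'a) \<noteq> 0" using two_nz[OF assms(1)] .
  have dnz: "d \<noteq> 0" using assms(5) unfolding d_def x1_def .
  have q1: "q < 1" using assms(6) unfolding q_def d_def x1_def .
  have q0: "q \<ge> 0" unfolding q_def by (rule B(7))
  have bd: "N (b / d) \<le> 1" using assms(7,8) unfolding d_def x1_def by simp
  have fix1: "b * x1 * x1 + (c - 1) * x1 = a"
  proof -
    have "2 * b * x1 = 1 - c + s" unfolding x1_def using two assms(2) by simp
    then have se: "s = 2 * b * x1 + (c - 1)" by (simp add: algebra_simps)
    have "(2 * b * x1 + (c - 1))^2 = (c - 1) ^ 2 + 4 * a * b" using assms(4) se by simp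
    then have "4*b*(b * x1 * x1 + (c - 1) * x1) = 4*b*a"
      by (simp add: algebra_simps power2_eq_square)
    moreover have "4*b \<noteq> 0" using two assms(2)
      by (metis mult_eq_0_iff numeral_Bit0_eq_double mult_2 one_add_one)
    ultimately show ?thesis by simp
  qed
  have step: "b * x + c \<noteq> 0 \<and> N (f x - x1) = q * N (x - x1)" if hx: "N (x - x1) < 1" for x
  proof -
    have "N (b / d * (x - x1)) \<le> N (x - x1)"
      using B(5)[of "b/d" "x - x1"] bd B(7)[of "x-x1"] B(7)[of "b/d"] by (metis mult_left_le_one_le)
    then have "N (1 + b / d * (x - x1)) = 1" using na_one_plus[OF na] hx by simp
    moreover have bx: "b * x + c = d * (1 + b / d * (x - x1))"
      using dnz unfolding d_def by (simp add: field_simps)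
    ultimately have Nbx: "N (b * x + c) = N d" using B(5) by simp
    have bxnz: "b * x + c \<noteq> 0" using Nbx dnz B(8) by metis
    have "f x - x1 = (c - a * b) * (x - x1) / ((b * x + c) * d)"
    proof -
      have "f x - x1 = ((x + a) - x1 * (b * x + c)) / (b * x + c)"
        unfolding f_def using bxnz by (simp add: field_simps)
      also have "(x + a) - x1 * (b * x + c) = (c - a * b) * (x - x1) / d"
      proof -
        have ae: "a = b*x1*x1 + (c-1)*x1" using fix1 by simp
        have "((x + a) - x1 * (b * x + c)) * d = (c - a * b) * (x - x1)"
          unfolding d_def ae by (simp add: algebra_simps)
        then show ?thesis using dnz by (simp add: field_simps)
      qed
      finally show ?thesis by simp
    qed
    also have "\<dots> = ((c - a * b) / d^2) * (x - x1) * (d / (b*x+c))"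
      using dnz bxnz by (simp add: divide_simps power2_eq_square del: of_nat_add)
    finally have fe: "f x - x1 = ((c - a * b) / d^2) * (x - x1) * (d / (b*x+c))" .
    have "N (d / (b*x+c)) * N (b*x+c) = N d" using B(5)[of "d / (b*x+c)" "b*x+c"] bxnz by simp
    then have "N (d / (b*x+c)) = 1" using Nbx dnz B(8)[of d] by simp
    moreover have "N (f x - x1) = N ((c - a * b) / d^2) * N (x - x1) * N (d/(b*x+c))"
      unfolding fe by (simp only: B(5))
    ultimately have "N (f x - x1) = q * N (x - x1)" unfolding q_def by simp
    then show ?thesis using bxnz by simp
  qed
  have iter: "N ((f ^^ n) y - x1) = q ^ n * N (y - x1) \<and> b * ((f ^^ n) y) + c \<noteq> 0"
    if hy: "N (y - x1) < 1" for y n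
  proof (induction n)
    case 0
    then show ?case using step[OF hy] by simp
  next
    case (Suc n)
    have lt: "N ((f ^^ n) y - x1) < 1"
    proof -
      have "q ^ n \<le> 1" using q0 q1 by (simp add: power_le_one)
      then have "q ^ n * N (y - x1) \<le> N (y - x1)" using B(7)[of "y - x1"] q0
        by (metis mult_left_le_one_le zero_le_power)
      then show ?thesis using Suc.IH hy by simp
    qed
    have "N ((f ^^ Suc n) y - x1) = q ^ Suc n * N (y - x1)"
      using step[OF lt] Suc.IH by simp
    moreover have "N ((f ^^ Suc n) y - x1) < 1"
    proof -
      have "q ^ Suc n \<le> 1" using q0 q1 by (intro power_le_one) auto
      then have "q ^ Suc n * N (y - x1) \<le> N (y - x1)" using B(7)[of "y - x1"] q0
        by (metis mult_left_le_one_le zero_le_power)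
      then show ?thesis using calculation hy by simp
    qed
    ultimately show ?case using step by blast
  qed
  show ?thesis
  proof
    fix y assume "y \<in> V1 N ((1 - c + s) / (2 * b))"
    then have hy: "N (y - x1) < 1" unfolding V1_def x1_def by simp
    have lim: "(\<lambda>n. q ^ n * N (y - x1)) \<longlonglongrightarrow> 0"
      using LIMSEQ_power_zero[of q] q0 q1 tendsto_mult_left_zero by auto
    show "y \<in> basin N (\<lambda>x. (x + a) / (b * x + c)) (\<lambda>x. b * x + c \<noteq> 0) ((1 - c + s) / (2 * b))"
      unfolding basin_def using iter[OF hy] lim f_def x1_def by simp
  qed
qed

end
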